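(* Let $n \ge 1$, let $f:\mathbb{R}^n \to \mathbb{R}^N$ be a smooth map and let $a \in \mathbb{R}^n$. Suppose $f$ satisfies the local condition at $a$, i.e. every solution $(v_1,v_2,v_3,\lambda) \in \mathbb{R}^n\times\mathbb{R}^n\times\mathbb{R}^n\times\mathbb{R}$ of $$Df_a(v_1) + D^2f_a(v_2,v_3) + \lambda\, D^3f_a(v_3,v_3,v_3) = 0$$ with $v_3 \neq 0$ satisfies $v_1 = 0$, $v_2 = 0$ and $\lambda = 0$. Then there is an open neighborhood $U$ of $a$ such that $f|_U$ is a totally skew embedding, i.e. $f|_U$ is an embedding and $f(U)$ is totally skew at every pair of distinct points of $f(U)$.
   Context: For a smooth $f:\mathbb{R}^n\to\mathbb{R}^N$ and $a\in\mathbb{R}^n$, $D^kf_a$ denotes the symmetric $k$-linear map $(\mathbb{R}^n)^k\to\mathbb{R}^N$ of $k$-th order partial derivatives, defined on the standard basis by $D^kf_a(e_{i_1},\dots,e_{i_k}) = \frac{\partial^k f}{\partial x_{i_1}\cdots\partial x_{i_k}}(a)$; $D^1f_a = Df_a$ is the usual derivative. For a submanifold $M\subseteq\mathbb{R}^N$ and distinct points $p,q\in M$, $M$ is totally skew at $p$ and $q$ if for every (affine) line tangent to $M$ at $p$ and every line tangent to $M$ at $q$, the two lines are neither parallel nor intersecting. *)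

theory Defs
  imports "HOL-Analysis.Analysis"
begin

text \<open>Vectors of R^n are represented as real^'n, points of R^N as real^'m.\<close>

definition pd :: "'n::finite \<Rightarrow> (real^'n \<Rightarrow> real^'m) \<Rightarrow> real^'n \<Rightarrow> real^'m" where
  "pd i f x = frechet_derivative f (at x) (axis i 1)"

fun Ck :: "nat \<Rightarrow> (real^'n::finite \<Rightarrow> real^'m::finite) \<Rightarrow> bool" where
  "Ck 0 f = continuous_on UNIV f"
| "Ck (Suc k) f = ((\<forall>x. f differentiable (at x)) \<and> (\<forall>i. Ck k (pd i f)))"

definition smooth :: "(real^'n::finite \<Rightarrow> real^'m::finite) \<Rightarrow> bool" where
  "smooth f \<longleftrightarrow> (\<forall>k. Ck k f)"

text \<open>D^1 f_a = Df_a, D^2 f_a, D^3 f_a: the multilinear maps with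
  D^k f_a(e_{i1},...,e_{ik}) = partial^k f / partial x_{i1} ... partial x_{ik} (a).\<close>
definition D1 :: "(real^'n::finite \<Rightarrow> real^'m::finite) \<Rightarrow> real^'n \<Rightarrow> real^'n \<Rightarrow> real^'m" where
  "D1 f a v = frechet_derivative f (at a) v"

definition D2 :: "(real^'n::finite \<Rightarrow> real^'m::finite) \<Rightarrow> real^'n \<Rightarrow> real^'n \<Rightarrow> real^'n \<Rightarrow> real^'m" where
  "D2 f a v w = (\<Sum>i\<in>UNIV. \<Sum>j\<in>UNIV. (v$i * w$j) *\<^sub>R pd i (pd j f) a)"

definition D3 :: "(real^'n::finite \<Rightarrow> real^'m::finite) \<Rightarrow> real^'n \<Rightarrow> real^'n \<Rightarrow> real^'n \<Rightarrow> real^'n \<Rightarrow> real^'m" where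
  "D3 f a u v w = (\<Sum>i\<in>UNIV. \<Sum>j\<in>UNIV. \<Sum>k\<in>UNIV.
      (u$i * v$j * w$k) *\<^sub>R pd i (pd j (pd k f)) a)"

definition local_condition :: "(real^'n::finite \<Rightarrow> real^'m::finite) \<Rightarrow> real^'n \<Rightarrow> bool" where
  "local_condition f a \<longleftrightarrow>
     (\<forall>v1 v2 v3 (lam::real). D1 f a v1 + D2 f a v2 v3 + lam *\<^sub>R D3 f a v3 v3 v3 = 0 \<and> v3 \<noteq> 0
        \<longrightarrow> v1 = 0 \<and> v2 = 0 \<and> lam = 0)"

definition aline :: "'a::real_vector \<Rightarrow> 'a \<Rightarrow> 'a set" where
  "aline p u = {p + t *\<^sub>R u | t. True}"

definition embedding_on :: "(real^'n::finite \<Rightarrow> real^'m::finite) \<Rightarrow> (real^'n) set \<Rightarrow> bool" where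
  "embedding_on f U \<longleftrightarrow> open U \<and> (\<forall>x\<in>U. f differentiable (at x)) \<and>
     (\<forall>x\<in>U. inj (frechet_derivative f (at x))) \<and>
     inj_on f U \<and> homeomorphism U (f ` U) f (inv_into U f)"

text \<open>For an embedding, the tangent space of f(U) at f x is the image of Df_x;
  tangent lines at f x are the lines f x + R u with u a nonzero tangent vector.\<close>
definition totally_skew_at :: "(real^'n::finite \<Rightarrow> real^'m::finite) \<Rightarrow> real^'n \<Rightarrow> real^'n \<Rightarrow> bool" where
  "totally_skew_at f x y \<longleftrightarrow>
    (\<forall>u w. u \<in> range (frechet_derivative f (at x)) \<and> u \<noteq> 0 \<and>
           w \<in> range (frechet_derivative f (at y)) \<and> w \<noteq> 0 \<longrightarrow>
       \<not> (\<exists>c. w = c *\<^sub>R u) \<and> aline (f x) u \<inter> aline (f y) w = {})"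

definition totally_skew_embedding :: "(real^'n::finite \<Rightarrow> real^'m::finite) \<Rightarrow> (real^'n) set \<Rightarrow> bool" where
  "totally_skew_embedding f U \<longleftrightarrow> embedding_on f U \<and>
     (\<forall>x\<in>U. \<forall>y\<in>U. f x \<noteq> f y \<longrightarrow> totally_skew_at f x y)"

end

theory Submission
  imports Defs
begin


lemma Ck_Suc_imp: "Ck (Suc k) g \<Longrightarrow> Ck k g"
proof (induction k arbitrary: g)
  case 0
  then have "\<forall>x. g differentiable (at x)" by simp
  then have "continuous_on UNIV g"
    by (simp add: continuous_at_imp_continuous_on differentiable_imp_continuous_within)
  then show ?case by (simp only: Ck.simps)
next
  case (Suc k)
  from Suc.prems have d: "\<forall>x. g differentiable (at x)" "\<forall>i. Ck (Suc k) (pd i g)"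
    by simp_all
  then have "\<forall>i. Ck k (pd i g)" using Suc.IH by blast
  with d show ?case by simp
qed

lemma smooth_pd: "smooth g \<Longrightarrow> smooth (pd i g)"
  unfolding smooth_def by (metis Ck.simps(2))

lemma smooth_diff: "smooth g \<Longrightarrow> g differentiable (at x)"
  unfolding smooth_def by (metis Ck.simps(2))

lemma smooth_cont: "smooth g \<Longrightarrow> continuous_on UNIV g"
  unfolding smooth_def by (metis Ck.simps(1))

lemma smooth_isCont: "smooth g \<Longrightarrow> isCont g x"
  using smooth_cont continuous_on_eq_continuous_at by blast

lemma fd_expand:
  fixes g :: "real^'n::finite \<Rightarrow> real^'m::finite"
  assumes "g differentiable (at z)"
  shows "frechet_derivative g (at z) v = (\<Sum>i\<in>UNIV. v$i *\<^sub>R pd i g z)"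
proof -
  have lin: "linear (frechet_derivative g (at z))"
    using assms by (rule linear_frechet_derivative)
  have "v = (\<Sum>i\<in>UNIV. v$i *\<^sub>R axis i 1)"
    using basis_expansion[of v] by (simp add: scalar_mult_eq_scaleR)
  then have "frechet_derivative g (at z) v = frechet_derivative g (at z) (\<Sum>i\<in>UNIV. v$i *\<^sub>R axis i 1)"
    by simp
  also have "\<dots> = (\<Sum>i\<in>UNIV. v$i *\<^sub>R frechet_derivative g (at z) (axis i 1))"
    using lin by (simp add: linear_sum linear_scale)
  finally show ?thesis by (simp add: pd_def)
qed

lemma D1_expand:
  assumes "smooth f"
  shows "D1 f z v = (\<Sum>i\<in>UNIV. v$i *\<^sub>R pd i f z)"
  unfolding D1_def using fd_expand smooth_diff[OF assms] by blast

lemma path_deriv: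
  fixes g :: "real^'n::finite \<Rightarrow> real^'m::finite"
  assumes "g differentiable (at (x + t *\<^sub>R h))"
  shows "((\<lambda>t. g (x + t *\<^sub>R h)) has_vector_derivative (\<Sum>i\<in>UNIV. h$i *\<^sub>R pd i g (x + t *\<^sub>R h))) (at t)"
proof -
  have p: "((\<lambda>t. x + t *\<^sub>R h) has_vector_derivative h) (at t)"
    by (auto intro!: derivative_eq_intros)
  have g: "(g has_derivative frechet_derivative g (at (x + t *\<^sub>R h))) (at (x + t *\<^sub>R h))"
    using assms frechet_derivative_works by blast
  have "((\<lambda>t. g (x + t *\<^sub>R h)) has_derivative (\<lambda>s. frechet_derivative g (at (x + t *\<^sub>R h)) (s *\<^sub>R h))) (at t)"
    using has_derivative_compose[OF p[unfolded has_vector_derivative_def] g] .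
  moreover have "(\<lambda>s. frechet_derivative g (at (x + t *\<^sub>R h)) (s *\<^sub>R h)) = (\<lambda>s. s *\<^sub>R frechet_derivative g (at (x + t *\<^sub>R h)) h)"
    using linear_frechet_derivative[OF assms] by (simp add: linear_scale)
  ultimately have "((g \<circ> (\<lambda>t. x + t *\<^sub>R h)) has_vector_derivative frechet_derivative g (at (x + t *\<^sub>R h)) h) (at t)"
    unfolding has_vector_derivative_def o_def by simp
  then show ?thesis using fd_expand[OF assms] by (simp add: o_def)
qed



lemma hvd_cscale: "(g has_vector_derivative g') F \<Longrightarrow> ((\<lambda>t. c *\<^sub>R g t) has_vector_derivative c *\<^sub>R g') F"
  by (rule bounded_linear.has_vector_derivative[OF bounded_linear_scaleR_right])

lemma hvd_sumc:
  "(\<And>k. (g k has_vector_derivative g' k) F) \<Longrightarrow>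
   ((\<lambda>t. \<Sum>k\<in>UNIV. c k *\<^sub>R g k t) has_vector_derivative (\<Sum>k\<in>UNIV. c k *\<^sub>R g' k)) F"
  by (intro has_vector_derivative_sum hvd_cscale)

lemma Dpath0:
  fixes f :: "real^'n::finite \<Rightarrow> real^'m::finite"
  assumes "smooth f"
  shows "((\<lambda>t. f (x + t *\<^sub>R h)) has_vector_derivative D1 f (x + t *\<^sub>R h) h) (at t)"
proof -
  have "D1 f (x + t *\<^sub>R h) h = (\<Sum>i\<in>UNIV. h$i *\<^sub>R pd i f (x + t *\<^sub>R h))"
    by (rule D1_expand[OF assms])
  then show ?thesis using path_deriv[OF smooth_diff[OF assms]] by simp
qed

lemma Dpath1:
  fixes f :: "real^'n::finite \<Rightarrow> real^'m::finite"
  assumes "smooth f"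
  shows "((\<lambda>t. D1 f (x + t *\<^sub>R h) Q) has_vector_derivative D2 f (x + t *\<^sub>R h) h Q) (at t)"
proof -
  have e: "(\<lambda>t. D1 f (x + t *\<^sub>R h) Q) = (\<lambda>t. \<Sum>k\<in>UNIV. Q$k *\<^sub>R pd k f (x + t *\<^sub>R h))"
    using D1_expand[OF assms] by auto
  have "((\<lambda>t. \<Sum>k\<in>UNIV. Q$k *\<^sub>R pd k f (x + t *\<^sub>R h)) has_vector_derivative
      (\<Sum>k\<in>UNIV. Q$k *\<^sub>R (\<Sum>j\<in>UNIV. h$j *\<^sub>R pd j (pd k f) (x + t *\<^sub>R h)))) (at t)"
    by (intro hvd_sumc path_deriv smooth_diff smooth_pd assms)
  moreover have "(\<Sum>k\<in>UNIV. Q$k *\<^sub>R (\<Sum>j\<in>UNIV. h$j *\<^sub>R pd j (pd k f) (x + t *\<^sub>R h)))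
      = D2 f (x + t *\<^sub>R h) h Q"
    unfolding D2_def scaleR_sum_right scaleR_scaleR
    by (subst sum.swap) (simp add: mult.commute)
  ultimately show ?thesis using e by simp
qed

lemma Dpath2:
  fixes f :: "real^'n::finite \<Rightarrow> real^'m::finite"
  assumes "smooth f"
  shows "((\<lambda>t. D2 f (x + t *\<^sub>R h) u v) has_vector_derivative D3 f (x + t *\<^sub>R h) h u v) (at t)"
proof -
  have "((\<lambda>t. \<Sum>i\<in>UNIV. \<Sum>j\<in>UNIV. (u$i * v$j) *\<^sub>R pd i (pd j f) (x + t *\<^sub>R h)) has_vector_derivative
      (\<Sum>i\<in>UNIV. \<Sum>j\<in>UNIV. (u$i * v$j) *\<^sub>R (\<Sum>k\<in>UNIV. h$k *\<^sub>R pd k (pd i (pd j f)) (x + t *\<^sub>R h)))) (at t)"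
    by (intro has_vector_derivative_sum hvd_cscale path_deriv smooth_diff smooth_pd assms)
  moreover have "(\<Sum>i\<in>UNIV. \<Sum>j\<in>UNIV. (u$i * v$j) *\<^sub>R (\<Sum>k\<in>UNIV. h$k *\<^sub>R pd k (pd i (pd j f)) (x + t *\<^sub>R h)))
     = (\<Sum>i\<in>UNIV. \<Sum>j\<in>UNIV. \<Sum>k\<in>UNIV. (h$k * u$i * v$j) *\<^sub>R pd k (pd i (pd j f)) (x + t *\<^sub>R h))"
    by (simp add: scaleR_sum_right mult_ac)
  also have "\<dots> = (\<Sum>i\<in>UNIV. \<Sum>k\<in>UNIV. \<Sum>j\<in>UNIV. (h$k * u$i * v$j) *\<^sub>R pd k (pd i (pd j f)) (x + t *\<^sub>R h))"
    by (rule sum.cong[OF refl], rule sum.swap)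
  also have "\<dots> = D3 f (x + t *\<^sub>R h) h u v"
    unfolding D3_def by (subst sum.swap) simp
  ultimately show ?thesis unfolding D2_def by (simp only:)
qed

lemma mvt_bound:
  fixes \<phi> :: "real \<Rightarrow> real^'m::finite"
  assumes "s \<ge> 0"
    and d: "\<And>t. t \<in> {0..s} \<Longrightarrow> (\<phi> has_vector_derivative \<phi>' t) (at t)"
    and b: "\<And>t. t \<in> {0..s} \<Longrightarrow> norm (\<phi>' t) \<le> B"
  shows "norm (\<phi> s - \<phi> 0) \<le> B * s"
proof (cases "s = 0")
  case True then show ?thesis by simp
next
  case False
  then have s: "0 < s" using assms by simp
  have c: "continuous_on {0..s} \<phi>"
    using d by (meson continuous_at_imp_continuous_on has_vector_derivative_continuous)
  obtain y where y: "y \<in> {0<..<s}" and le: "norm (\<phi> s - \<phi> 0) \<le> norm ((s - 0) *\<^sub>R \<phi>' y)"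
    using mvt_general[OF s c, of "\<lambda>t d. d *\<^sub>R \<phi>' t"] d unfolding has_vector_derivative_def by force
  have "norm ((s - 0) *\<^sub>R \<phi>' y) = s * norm (\<phi>' y)" using s by simp
  also have "\<dots> \<le> s * B" using b y s by (intro mult_left_mono) auto
  finally show ?thesis using le by (simp add: mult.commute)
qed

lemma mvt_bound1:
  fixes \<phi> :: "real \<Rightarrow> real^'m::finite"
  assumes "s \<in> {0..1}"
    and d: "\<And>t. t \<in> {0..1} \<Longrightarrow> (\<phi> has_vector_derivative \<phi>' t) (at t)"
    and b: "\<And>t. t \<in> {0..1} \<Longrightarrow> norm (\<phi>' t) \<le> B"
  shows "norm (\<phi> s - \<phi> 0) \<le> B"
proof -
  have "norm (\<phi>' 0) \<le> B" using b[of 0] by simp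
  then have B: "0 \<le> B" using norm_ge_zero[of "\<phi>' 0"] by linarith
  have "norm (\<phi> s - \<phi> 0) \<le> B * s"
    using assms by (intro mvt_bound[where \<phi>'=\<phi>']) auto
  also have "\<dots> \<le> B" using B assms(1) by (intro mult_left_le) auto
  finally show ?thesis .
qed

lemma taylor2:
  fixes ga :: "real \<Rightarrow> real^'m::finite"
  assumes d0: "\<And>t. t \<in> {0..1} \<Longrightarrow> (ga has_vector_derivative gb t) (at t)"
    and d1: "\<And>t. t \<in> {0..1} \<Longrightarrow> (gb has_vector_derivative gc t) (at t)"
    and b: "\<And>t. t \<in> {0..1} \<Longrightarrow> norm (gc t - gc 0) \<le> B"
  shows "norm (ga 1 - ga 0 - gb 0 - (1/2) *\<^sub>R gc 0) \<le> B"
proof -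
  define \<phi>1 where "\<phi>1 t = gb t - t *\<^sub>R gc 0" for t
  have dd1: "(\<phi>1 has_vector_derivative (gc t - gc 0)) (at t)" if "t \<in> {0..1}" for t
    unfolding \<phi>1_def[abs_def] using d1[OF that]
    by (auto intro!: derivative_eq_intros)
  have b1: "norm (\<phi>1 t - \<phi>1 0) \<le> B" if "t \<in> {0..1}" for t
    using mvt_bound1[OF that dd1 b] by blast
  define \<phi> where "\<phi> t = ga t - t *\<^sub>R gb 0 - (t^2/2) *\<^sub>R gc 0" for t
  have dd: "(\<phi> has_vector_derivative (\<phi>1 t - \<phi>1 0)) (at t)" if "t \<in> {0..1}" for t
    unfolding \<phi>_def[abs_def] \<phi>1_def using d0[OF that]
    by (auto intro!: derivative_eq_intros simp: algebra_simps)
  have "norm (\<phi> 1 - \<phi> 0) \<le> B" using mvt_bound1[of 1, OF _ dd b1] by auto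
  then show ?thesis unfolding \<phi>_def by (simp add: algebra_simps)
qed

lemma taylor3:
  fixes ga :: "real \<Rightarrow> real^'m::finite"
  assumes d0: "\<And>t. t \<in> {0..1} \<Longrightarrow> (ga has_vector_derivative gb t) (at t)"
    and d1: "\<And>t. t \<in> {0..1} \<Longrightarrow> (gb has_vector_derivative gc t) (at t)"
    and d2: "\<And>t. t \<in> {0..1} \<Longrightarrow> (gc has_vector_derivative gd t) (at t)"
    and b: "\<And>t. t \<in> {0..1} \<Longrightarrow> norm (gd t - gd 0) \<le> B"
  shows "norm (ga 1 - ga 0 - gb 0 - (1/2) *\<^sub>R gc 0 - (1/6) *\<^sub>R gd 0) \<le> B"
proof -
  define \<phi>2 where "\<phi>2 t = gc t - t *\<^sub>R gd 0" for t
  have dd2: "(\<phi>2 has_vector_derivative (gd t - gd 0)) (at t)" if "t \<in> {0..1}" for t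
    unfolding \<phi>2_def[abs_def] using d2[OF that]
    by (auto intro!: derivative_eq_intros)
  have b2: "norm (\<phi>2 t - \<phi>2 0) \<le> B" if "t \<in> {0..1}" for t
    using mvt_bound1[OF that dd2 b] by blast
  define \<phi>1 where "\<phi>1 t = gb t - t *\<^sub>R gc 0 - (t^2/2) *\<^sub>R gd 0" for t
  have dd1: "(\<phi>1 has_vector_derivative (\<phi>2 t - \<phi>2 0)) (at t)" if "t \<in> {0..1}" for t
    unfolding \<phi>1_def[abs_def] \<phi>2_def using d1[OF that]
    by (auto intro!: derivative_eq_intros simp: algebra_simps)
  have b1: "norm (\<phi>1 t - \<phi>1 0) \<le> B" if "t \<in> {0..1}" for t
    using mvt_bound1[OF that dd1 b2] by blast
  define \<phi> where "\<phi> t = ga t - t *\<^sub>R gb 0 - (t^2/2) *\<^sub>R gc 0 - (t^3/6) *\<^sub>R gd 0" for t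
  have dd: "(\<phi> has_vector_derivative (\<phi>1 t - \<phi>1 0)) (at t)" if "t \<in> {0..1}" for t
    unfolding \<phi>_def[abs_def] \<phi>1_def using d0[OF that]
    by (auto intro!: derivative_eq_intros simp: algebra_simps)
  have "norm (\<phi> 1 - \<phi> 0) \<le> B" using mvt_bound1[of 1, OF _ dd b1] by auto
  then show ?thesis unfolding \<phi>_def by (simp add: algebra_simps)
qed



lemma sum_axis_scale: "(\<Sum>k\<in>UNIV. axis j (1::real) $ k *\<^sub>R F k) = (F j :: 'a::real_vector)"
proof -
  have "(\<Sum>k\<in>UNIV. axis j (1::real) $ k *\<^sub>R F k) = (\<Sum>k\<in>UNIV. if k = j then F k else 0)"
    by (rule sum.cong) (auto simp: axis_def)
  then show ?thesis by simp
qed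

lemma path_deriv_axis:
  fixes g :: "real^'n::finite \<Rightarrow> real^'m::finite"
  assumes "g differentiable (at (x + t *\<^sub>R axis j 1))"
  shows "((\<lambda>t. g (x + t *\<^sub>R axis j 1)) has_vector_derivative pd j g (x + t *\<^sub>R axis j 1)) (at t)"
  using path_deriv[OF assms] by (simp only: sum_axis_scale)

lemma clairaut_half:
  fixes g :: "real^'n::finite \<Rightarrow> real^'m::finite"
  assumes sm: "smooth g" and s: "s > 0"
    and bnd: "\<And>z. norm (z - a) \<le> 2 * s \<Longrightarrow> norm (pd j (pd i g) z - pd j (pd i g) a) \<le> eta"
  shows "norm (g (a + s *\<^sub>R axis j 1 + s *\<^sub>R axis i 1) - g (a + s *\<^sub>R axis i 1) - g (a + s *\<^sub>R axis j 1) + g a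
           - (s * s) *\<^sub>R pd j (pd i g) a) \<le> eta * (s * s)"
proof -
  define c where "c = pd j (pd i g) a"
  define ei where "ei = (axis i 1 :: real^'n)"
  define ej where "ej = (axis j 1 :: real^'n)"
  have nei: "norm ei = 1" "norm ej = 1" by (simp_all add: ei_def ej_def)
  have inner: "norm (pd i g (a + u *\<^sub>R ei + s *\<^sub>R ej) - pd i g (a + u *\<^sub>R ei) - s *\<^sub>R c) \<le> eta * s"
    if u: "u \<in> {0..s}" for u
  proof -
    define \<psi> where "\<psi> v = pd i g (a + u *\<^sub>R ei + v *\<^sub>R ej) - v *\<^sub>R c" for v
    have d: "(\<psi> has_vector_derivative (pd j (pd i g) (a + u *\<^sub>R ei + v *\<^sub>R ej) - c)) (at v)" for v
    proof -
      have "((\<lambda>v. pd i g (a + u *\<^sub>R ei + v *\<^sub>R axis j 1)) has_vector_derivative pd j (pd i g) (a + u *\<^sub>R ei + v *\<^sub>R axis j 1)) (at v)"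
        by (intro path_deriv_axis smooth_diff smooth_pd sm)
      then show ?thesis unfolding \<psi>_def[abs_def] ej_def
        by (intro derivative_eq_intros) auto
    qed
    have b: "norm (pd j (pd i g) (a + u *\<^sub>R ei + v *\<^sub>R ej) - c) \<le> eta" if v: "v \<in> {0..s}" for v
    proof -
      have "norm (a + u *\<^sub>R ei + v *\<^sub>R ej - a) \<le> norm (u *\<^sub>R ei) + norm (v *\<^sub>R ej)"
        using norm_triangle_ineq[of "u *\<^sub>R ei" "v *\<^sub>R ej"] by (simp add: algebra_simps)
      also have "\<dots> = u + v" using u v nei by simp
      also have "\<dots> \<le> 2 * s" using u v by simp
      finally show ?thesis unfolding c_def by (rule bnd)
    qed
    have "norm (\<psi> s - \<psi> 0) \<le> eta * s"
      using s by (intro mvt_bound[where \<phi>'="\<lambda>v. pd j (pd i g) (a + u *\<^sub>R ei + v *\<^sub>R ej) - c"] d b) auto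
    then show ?thesis unfolding \<psi>_def by (simp add: algebra_simps)
  qed
  define chi where "chi u = g ((a + s *\<^sub>R ej) + u *\<^sub>R ei) - g (a + u *\<^sub>R ei) - u *\<^sub>R (s *\<^sub>R c)" for u
  have d: "(chi has_vector_derivative (pd i g (a + s *\<^sub>R ej + u *\<^sub>R ei) - pd i g (a + u *\<^sub>R ei) - s *\<^sub>R c)) (at u)" for u
  proof -
    have 1: "((\<lambda>u. g (a + s *\<^sub>R ej + u *\<^sub>R axis i 1)) has_vector_derivative pd i g (a + s *\<^sub>R ej + u *\<^sub>R axis i 1)) (at u)"
      by (intro path_deriv_axis smooth_diff sm)
    have 2: "((\<lambda>u. g (a + u *\<^sub>R axis i 1)) has_vector_derivative pd i g (a + u *\<^sub>R axis i 1)) (at u)"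
      by (intro path_deriv_axis smooth_diff sm)
    have 3: "((\<lambda>u. u *\<^sub>R (s *\<^sub>R c)) has_vector_derivative s *\<^sub>R c) (at u)"
      using bounded_linear.has_vector_derivative[OF bounded_linear_scaleR_left has_vector_derivative_id, of "s *\<^sub>R c" "at u"] by simp
    show ?thesis using has_vector_derivative_diff[OF has_vector_derivative_diff[OF 1 2] 3]
      unfolding chi_def[abs_def] ei_def .
  qed
  have b: "norm (pd i g (a + s *\<^sub>R ej + u *\<^sub>R ei) - pd i g (a + u *\<^sub>R ei) - s *\<^sub>R c) \<le> eta * s" if "u \<in> {0..s}" for u
    using inner[OF that] by (simp add: add_ac)
  have "norm (chi s - chi 0) \<le> (eta * s) * s"
    using s by (intro mvt_bound[OF _ d b]) auto
  then show ?thesis unfolding chi_def c_def ei_def ej_def by (simp add: algebra_simps)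
qed


lemma cont_delta:
  assumes "isCont F a" "e > 0"
  obtains d where "d > 0" "\<And>z. norm (z - a) < d \<Longrightarrow> norm (F z - F a) < e"
  using assms continuous_at_eps_delta[of a F] by (metis dist_norm)

lemma clairaut:
  fixes g :: "real^'n::finite \<Rightarrow> real^'m::finite"
  assumes sm: "smooth g"
  shows "pd j (pd i g) a = pd i (pd j g) a"
proof -
  define c1 where "c1 = pd j (pd i g) a"
  define c2 where "c2 = pd i (pd j g) a"
  have key: "norm (c1 - c2) \<le> 2 * eta" if eta: "eta > 0" for eta
  proof -
    obtain d1 where d1: "d1 > 0" "\<And>z. norm (z - a) < d1 \<Longrightarrow> norm (pd j (pd i g) z - pd j (pd i g) a) < eta"
      using cont_delta[OF smooth_isCont[OF smooth_pd[OF smooth_pd[OF sm]]] eta] by blast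
    obtain d2 where d2: "d2 > 0" "\<And>z. norm (z - a) < d2 \<Longrightarrow> norm (pd i (pd j g) z - pd i (pd j g) a) < eta"
      using cont_delta[OF smooth_isCont[OF smooth_pd[OF smooth_pd[OF sm]]] eta] by blast
    define s where "s = min d1 d2 / 3"
    have s: "s > 0" using d1 d2 by (simp add: s_def)
    have A: "norm (g (a + s *\<^sub>R axis j 1 + s *\<^sub>R axis i 1) - g (a + s *\<^sub>R axis i 1) - g (a + s *\<^sub>R axis j 1) + g a
           - (s * s) *\<^sub>R c1) \<le> eta * (s * s)"
      unfolding c1_def
    proof (rule clairaut_half[OF sm s])
      fix z :: "real^'n" assume "norm (z - a) \<le> 2 * s"
      then have "norm (z - a) < d1" using s d1 unfolding s_def by linarith
      then show "norm (pd j (pd i g) z - pd j (pd i g) a) \<le> eta" using d1 by force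
    qed
    have B: "norm (g (a + s *\<^sub>R axis i 1 + s *\<^sub>R axis j 1) - g (a + s *\<^sub>R axis j 1) - g (a + s *\<^sub>R axis i 1) + g a
           - (s * s) *\<^sub>R c2) \<le> eta * (s * s)"
      unfolding c2_def
    proof (rule clairaut_half[OF sm s])
      fix z :: "real^'n" assume "norm (z - a) \<le> 2 * s"
      then have "norm (z - a) < d2" using s d2 unfolding s_def by linarith
      then show "norm (pd i (pd j g) z - pd i (pd j g) a) \<le> eta" using d2 by force
    qed
    define D where "D = g (a + s *\<^sub>R axis j 1 + s *\<^sub>R axis i 1) - g (a + s *\<^sub>R axis i 1) - g (a + s *\<^sub>R axis j 1) + g a"
    have D2: "D = g (a + s *\<^sub>R axis i 1 + s *\<^sub>R axis j 1) - g (a + s *\<^sub>R axis j 1) - g (a + s *\<^sub>R axis i 1) + g a"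
      unfolding D_def by (simp add: algebra_simps)
    have "(s * s) *\<^sub>R (c1 - c2) = (D - (s * s) *\<^sub>R c2) - (D - (s * s) *\<^sub>R c1)"
      by (simp add: algebra_simps)
    then have "norm ((s * s) *\<^sub>R (c1 - c2)) \<le> norm (D - (s * s) *\<^sub>R c2) + norm (D - (s * s) *\<^sub>R c1)"
      by (metis norm_triangle_ineq4)
    also have "\<dots> \<le> eta * (s * s) + eta * (s * s)"
      using A B unfolding D_def[symmetric] D2[symmetric] by linarith
    finally have N: "norm ((s * s) *\<^sub>R (c1 - c2)) \<le> eta * (s * s) + eta * (s * s)" .
    have "norm ((s * s) *\<^sub>R (c1 - c2)) = (s * s) * norm (c1 - c2)" by simp
    with N have "(s * s) * norm (c1 - c2) \<le> (s * s) * (2 * eta)" by (simp add: algebra_simps)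
    then show ?thesis using s by (simp add: mult_le_cancel_left_pos)
  qed
  have "norm (c1 - c2) = 0"
  proof (rule ccontr)
    assume "norm (c1 - c2) \<noteq> 0"
    then have p: "norm (c1 - c2) > 0" by simp
    have "norm (c1 - c2) \<le> 2 * (norm (c1 - c2) / 4)" by (rule key) (use p in simp)
    then show False using p by simp
  qed
  then show ?thesis unfolding c1_def c2_def by simp
qed



lemma D1_lin:
  fixes f :: "real^'n::finite \<Rightarrow> real^'m::finite"
  assumes "smooth f"
  shows "D1 f z (u + v) = D1 f z u + D1 f z v" "D1 f z (c *\<^sub>R u) = c *\<^sub>R D1 f z u"
    "D1 f z (u - v) = D1 f z u - D1 f z v" "D1 f z 0 = 0"
  using linear_frechet_derivative[OF smooth_diff[OF assms, of z]] unfolding D1_def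
  by (simp_all add: linear_add linear_scale linear_diff linear_0)

lemma D2_lin:
  "D2 f z (c *\<^sub>R u) v = c *\<^sub>R D2 f z u v"
  "D2 f z u (c *\<^sub>R v) = c *\<^sub>R D2 f z u v"
  "D2 f z u (v + w) = D2 f z u v + D2 f z u w"
  unfolding D2_def by (simp_all add: scaleR_sum_right algebra_simps sum.distrib)

lemma D3_lin:
  "D3 f z (c *\<^sub>R u) v w = c *\<^sub>R D3 f z u v w"
  "D3 f z u (c *\<^sub>R v) w = c *\<^sub>R D3 f z u v w"
  "D3 f z u v (c *\<^sub>R w) = c *\<^sub>R D3 f z u v w"
  "D3 f z u v (w + w') = D3 f z u v w + D3 f z u v w'"
  unfolding D3_def by (simp_all add: scaleR_sum_right algebra_simps sum.distrib)

lemma sum1_bound: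
  fixes G :: "'n::finite \<Rightarrow> 'a::real_normed_vector"
  shows "norm (\<Sum>i\<in>UNIV. u$i *\<^sub>R G i) \<le> norm u * (\<Sum>i\<in>UNIV. norm (G i))"
proof -
  have "norm (\<Sum>i\<in>UNIV. u$i *\<^sub>R G i) \<le> (\<Sum>i\<in>UNIV. norm (u$i *\<^sub>R G i))" by (rule norm_sum)
  also have "\<dots> \<le> (\<Sum>i\<in>UNIV. norm u * norm (G i))"
    by (intro sum_mono) (simp add: mult_right_mono component_le_norm_cart)
  finally show ?thesis by (simp add: sum_distrib_left)
qed

lemma sum2_bound:
  fixes G :: "'n::finite \<Rightarrow> 'n \<Rightarrow> 'a::real_normed_vector"
  shows "norm (\<Sum>i\<in>UNIV. \<Sum>j\<in>UNIV. (u$i * v$j) *\<^sub>R G i j) \<le> norm u * norm v * (\<Sum>i\<in>UNIV. \<Sum>j\<in>UNIV. norm (G i j))"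
proof -
  have "norm (\<Sum>i\<in>UNIV. \<Sum>j\<in>UNIV. (u$i * v$j) *\<^sub>R G i j) \<le> (\<Sum>i\<in>UNIV. norm (\<Sum>j\<in>UNIV. (u$i * v$j) *\<^sub>R G i j))"
    by (rule norm_sum)
  also have "\<dots> \<le> (\<Sum>i\<in>UNIV. \<Sum>j\<in>UNIV. norm ((u$i * v$j) *\<^sub>R G i j))"
    by (intro sum_mono norm_sum)
  also have "\<dots> \<le> (\<Sum>i\<in>UNIV. \<Sum>j\<in>UNIV. (norm u * norm v) * norm (G i j))"
    by (intro sum_mono) (simp add: abs_mult mult_right_mono mult_mono component_le_norm_cart)
  finally show ?thesis by (simp add: sum_distrib_left)
qed

lemma sum3_bound:
  fixes G :: "'n::finite \<Rightarrow> 'n \<Rightarrow> 'n \<Rightarrow> 'a::real_normed_vector"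
  shows "norm (\<Sum>i\<in>UNIV. \<Sum>j\<in>UNIV. \<Sum>k\<in>UNIV. (u$i * v$j * w$k) *\<^sub>R G i j k)
     \<le> norm u * norm v * norm w * (\<Sum>i\<in>UNIV. \<Sum>j\<in>UNIV. \<Sum>k\<in>UNIV. norm (G i j k))"
proof -
  have "norm (\<Sum>i\<in>UNIV. \<Sum>j\<in>UNIV. \<Sum>k\<in>UNIV. (u$i * v$j * w$k) *\<^sub>R G i j k)
      \<le> (\<Sum>i\<in>UNIV. norm (\<Sum>j\<in>UNIV. \<Sum>k\<in>UNIV. (u$i * v$j * w$k) *\<^sub>R G i j k))"
    by (rule norm_sum)
  also have "\<dots> \<le> (\<Sum>i\<in>UNIV. \<Sum>j\<in>UNIV. norm (\<Sum>k\<in>UNIV. (u$i * v$j * w$k) *\<^sub>R G i j k))"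
    by (intro sum_mono norm_sum)
  also have "\<dots> \<le> (\<Sum>i\<in>UNIV. \<Sum>j\<in>UNIV. \<Sum>k\<in>UNIV. norm ((u$i * v$j * w$k) *\<^sub>R G i j k))"
    by (intro sum_mono norm_sum)
  also have "\<dots> \<le> (\<Sum>i\<in>UNIV. \<Sum>j\<in>UNIV. \<Sum>k\<in>UNIV. (norm u * norm v * norm w) * norm (G i j k))"
  proof (intro sum_mono)
    fix i j k
    have "\<bar>u$i\<bar> * \<bar>v$j\<bar> * \<bar>w$k\<bar> \<le> norm u * norm v * norm w"
      by (intro mult_mono component_le_norm_cart) auto
    then show "norm ((u$i * v$j * w$k) *\<^sub>R G i j k) \<le> (norm u * norm v * norm w) * norm (G i j k)"
      by (simp add: abs_mult mult_right_mono)
  qed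
  finally show ?thesis by (simp add: sum_distrib_left)
qed

lemma D1_diff_bound:
  fixes f :: "real^'n::finite \<Rightarrow> real^'m::finite"
  assumes "smooth f"
  shows "norm (D1 f x v - D1 f z v) \<le> norm v * (\<Sum>i\<in>UNIV. norm (pd i f x - pd i f z))"
proof -
  have "D1 f x v - D1 f z v = (\<Sum>i\<in>UNIV. v$i *\<^sub>R (pd i f x - pd i f z))"
    unfolding D1_expand[OF assms] by (simp add: sum_subtractf scaleR_diff_right)
  then show ?thesis using sum1_bound[of v "\<lambda>i. pd i f x - pd i f z"] by simp
qed

lemma D2_diff_bound:
  shows "norm (D2 f x u v - D2 f z u v) \<le> norm u * norm v * (\<Sum>i\<in>UNIV. \<Sum>j\<in>UNIV. norm (pd i (pd j f) x - pd i (pd j f) z))"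
proof -
  have "D2 f x u v - D2 f z u v = (\<Sum>i\<in>UNIV. \<Sum>j\<in>UNIV. (u$i * v$j) *\<^sub>R (pd i (pd j f) x - pd i (pd j f) z))"
    unfolding D2_def by (simp add: sum_subtractf scaleR_diff_right)
  then show ?thesis using sum2_bound[of u v "\<lambda>i j. pd i (pd j f) x - pd i (pd j f) z"] by simp
qed

lemma D3_diff_bound:
  shows "norm (D3 f x u v w - D3 f z u v w) \<le> norm u * norm v * norm w *
     (\<Sum>i\<in>UNIV. \<Sum>j\<in>UNIV. \<Sum>k\<in>UNIV. norm (pd i (pd j (pd k f)) x - pd i (pd j (pd k f)) z))"
proof -
  have "D3 f x u v w - D3 f z u v w = (\<Sum>i\<in>UNIV. \<Sum>j\<in>UNIV. \<Sum>k\<in>UNIV. (u$i * v$j * w$k) *\<^sub>R (pd i (pd j (pd k f)) x - pd i (pd j (pd k f)) z))"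
    unfolding D3_def by (simp add: sum_subtractf scaleR_diff_right)
  then show ?thesis using sum3_bound[of u v w "\<lambda>i j k. pd i (pd j (pd k f)) x - pd i (pd j (pd k f)) z"] by simp
qed

lemma D3_bound:
  shows "norm (D3 f x u v w) \<le> norm u * norm v * norm w *
     (\<Sum>i\<in>UNIV. \<Sum>j\<in>UNIV. \<Sum>k\<in>UNIV. norm (pd i (pd j (pd k f)) x))"
  unfolding D3_def by (rule sum3_bound)

lemma D2_sym:
  fixes f :: "real^'n::finite \<Rightarrow> real^'m::finite"
  assumes "smooth f"
  shows "D2 f a u v = D2 f a v u"
proof -
  have "D2 f a u v = (\<Sum>i\<in>UNIV. \<Sum>j\<in>UNIV. (u$i * v$j) *\<^sub>R pd j (pd i f) a)"
    unfolding D2_def by (intro sum.cong refl) (subst clairaut[OF assms], rule refl)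
  also have "\<dots> = (\<Sum>j\<in>UNIV. \<Sum>i\<in>UNIV. (u$i * v$j) *\<^sub>R pd j (pd i f) a)"
    by (rule sum.swap)
  also have "\<dots> = D2 f a v u" unfolding D2_def by (simp add: mult.commute)
  finally show ?thesis .
qed



lemma lower_bound:
  fixes f :: "real^'n::finite \<Rightarrow> real^'m::finite"
  assumes sm: "smooth f" and lc: "local_condition f a"
  shows "\<exists>c>0. \<forall>e V1 V2 lam. norm e = 1 \<longrightarrow>
           c * (norm V1 + norm V2 + \<bar>lam\<bar>) \<le> norm (D1 f a V1 + D2 f a V2 e + lam *\<^sub>R D3 f a e e e)"
proof -
  define L :: "(real^'n) \<times> (real^'n) \<times> (real^'n) \<times> real \<Rightarrow> real^'m" where
    "L p = D1 f a (fst (snd p)) + D2 f a (fst (snd (snd p))) (fst p)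
        + snd (snd (snd p)) *\<^sub>R D3 f a (fst p) (fst p) (fst p)" for p
  define N :: "(real^'n) \<times> (real^'n) \<times> (real^'n) \<times> real \<Rightarrow> real" where
    "N p = norm (fst (snd p)) + norm (fst (snd (snd p))) + \<bar>snd (snd (snd p))\<bar>" for p
  define S where "S = {p. norm (fst p) = 1} \<inter> {p. N p = 1}"
  have contL: "continuous_on UNIV L"
    unfolding L_def[abs_def] D1_expand[OF sm] D2_def D3_def
    by (intro continuous_intros)
  have contN: "continuous_on UNIV N"
    unfolding N_def[abs_def] by (intro continuous_intros)
  have closedS: "closed S"
    unfolding S_def
    by (intro closed_Int closed_Collect_eq contN continuous_intros)
  have boundedS: "bounded S"
    unfolding bounded_iff
  proof (intro exI ballI)
    fix p assume "p \<in> S"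
    then have n: "norm (fst p) = 1" "N p = 1" by (auto simp: S_def)
    obtain e V1 V2 l where p: "p = (e, V1, V2, l)" by (cases p) auto
    have "norm p \<le> norm e + (norm V1 + (norm V2 + norm l))"
      unfolding p by (meson add_left_mono norm_Pair_le order_trans)
    also have "\<dots> = 2" using n unfolding p N_def by simp
    finally show "norm p \<le> 2" .
  qed
  have compactS: "compact S" using closedS boundedS compact_eq_bounded_closed by blast
  define e0 :: "real^'n" where "e0 = axis undefined 1"
  have "(e0, e0, 0, 0) \<in> S" unfolding S_def N_def e0_def by simp
  then have neS: "S \<noteq> {}" by blast
  obtain p0 where p0: "p0 \<in> S" and min: "\<And>p. p \<in> S \<Longrightarrow> norm (L p0) \<le> norm (L p)"
    using continuous_attains_inf[OF compactS neS, of "\<lambda>p. norm (L p)"]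
      continuous_on_subset[OF contL] by (metis continuous_on_norm subset_UNIV)
  define c where "c = norm (L p0)"
  have cpos: "c > 0"
  proof (rule ccontr)
    assume "\<not> c > 0"
    then have "L p0 = 0" unfolding c_def by simp
    moreover have "fst p0 \<noteq> 0" using p0 unfolding S_def by auto
    ultimately have "fst (snd p0) = 0 \<and> fst (snd (snd p0)) = 0 \<and> snd (snd (snd p0)) = 0"
      using lc unfolding local_condition_def L_def by blast
    then show False using p0 unfolding S_def N_def by simp
  qed
  have "c * (norm V1 + norm V2 + \<bar>lam\<bar>) \<le> norm (D1 f a V1 + D2 f a V2 e + lam *\<^sub>R D3 f a e e e)"
    if e: "norm e = 1" for e V1 V2 lam
  proof (cases "norm V1 + norm V2 + \<bar>lam\<bar> = 0")
    case True then show ?thesis by simp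
  next
    case False
    define t where "t = norm V1 + norm V2 + \<bar>lam\<bar>"
    have t: "t > 0" using False unfolding t_def
      by (metis add_nonneg_nonneg abs_ge_zero norm_ge_zero order_le_less)
    define p where "p = (e, (1/t) *\<^sub>R V1, (1/t) *\<^sub>R V2, lam / t)"
    have "N p = (norm V1 + norm V2 + \<bar>lam\<bar>) / t"
      unfolding N_def p_def using t by (simp add: add_divide_distrib)
    then have "p \<in> S" unfolding S_def using t e by (simp add: t_def p_def)
    then have "c \<le> norm (L p)" using min unfolding c_def by blast
    also have "L p = (1/t) *\<^sub>R (D1 f a V1 + D2 f a V2 e + lam *\<^sub>R D3 f a e e e)"
      unfolding L_def p_def by (simp add: D1_lin[OF sm] D2_lin algebra_simps)
    also have "norm \<dots> = norm (D1 f a V1 + D2 f a V2 e + lam *\<^sub>R D3 f a e e e) / t"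
      using t by simp
    finally show ?thesis using t unfolding t_def[symmetric] by (simp add: pos_le_divide_eq mult.commute)
  qed
  then show ?thesis using cpos by blast
qed



definition S1f :: "(real^'n::finite \<Rightarrow> real^'m::finite) \<Rightarrow> real^'n \<Rightarrow> real^'n \<Rightarrow> real" where
  "S1f f a z = (\<Sum>i\<in>UNIV. norm (pd i f z - pd i f a))"
definition S2f :: "(real^'n::finite \<Rightarrow> real^'m::finite) \<Rightarrow> real^'n \<Rightarrow> real^'n \<Rightarrow> real" where
  "S2f f a z = (\<Sum>i\<in>UNIV. \<Sum>j\<in>UNIV. norm (pd i (pd j f) z - pd i (pd j f) a))"
definition S3f :: "(real^'n::finite \<Rightarrow> real^'m::finite) \<Rightarrow> real^'n \<Rightarrow> real^'n \<Rightarrow> real" where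
  "S3f f a z = (\<Sum>i\<in>UNIV. \<Sum>j\<in>UNIV. \<Sum>k\<in>UNIV. norm (pd i (pd j (pd k f)) z - pd i (pd j (pd k f)) a))"
definition K3 :: "(real^'n::finite \<Rightarrow> real^'m::finite) \<Rightarrow> real^'n \<Rightarrow> real" where
  "K3 f z = (\<Sum>i\<in>UNIV. \<Sum>j\<in>UNIV. \<Sum>k\<in>UNIV. norm (pd i (pd j (pd k f)) z))"

lemma S3_tri:
  "(\<Sum>i\<in>UNIV. \<Sum>j\<in>UNIV. \<Sum>k\<in>UNIV. norm (pd i (pd j (pd k f)) z - pd i (pd j (pd k f)) x))
    \<le> S3f f a z + S3f f a x"
proof -
  have "(\<Sum>i\<in>UNIV. \<Sum>j\<in>UNIV. \<Sum>k\<in>UNIV. norm (pd i (pd j (pd k f)) z - pd i (pd j (pd k f)) x))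
     \<le> (\<Sum>i\<in>UNIV. \<Sum>j\<in>UNIV. \<Sum>k\<in>UNIV. norm (pd i (pd j (pd k f)) z - pd i (pd j (pd k f)) a)
            + norm (pd i (pd j (pd k f)) x - pd i (pd j (pd k f)) a))"
  proof (intro sum_mono)
    fix i j k
    show "norm (pd i (pd j (pd k f)) z - pd i (pd j (pd k f)) x)
       \<le> norm (pd i (pd j (pd k f)) z - pd i (pd j (pd k f)) a) + norm (pd i (pd j (pd k f)) x - pd i (pd j (pd k f)) a)"
      using norm_triangle_ineq4[of "pd i (pd j (pd k f)) z - pd i (pd j (pd k f)) a" "pd i (pd j (pd k f)) x - pd i (pd j (pd k f)) a"]
      by simp
  qed
  then show ?thesis unfolding S3f_def by (simp add: sum.distrib)
qed

lemma K3_tri: "K3 f x \<le> K3 f a + S3f f a x"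
proof -
  have "K3 f x \<le> (\<Sum>i\<in>UNIV. \<Sum>j\<in>UNIV. \<Sum>k\<in>UNIV. norm (pd i (pd j (pd k f)) a)
            + norm (pd i (pd j (pd k f)) x - pd i (pd j (pd k f)) a))"
    unfolding K3_def
  proof (intro sum_mono)
    fix i j k
    show "norm (pd i (pd j (pd k f)) x)
       \<le> norm (pd i (pd j (pd k f)) a) + norm (pd i (pd j (pd k f)) x - pd i (pd j (pd k f)) a)"
      using norm_triangle_ineq[of "pd i (pd j (pd k f)) a" "pd i (pd j (pd k f)) x - pd i (pd j (pd k f)) a"]
      by simp
  qed
  then show ?thesis unfolding S3f_def K3_def by (simp add: sum.distrib)
qed

lemma segment_in_ball:
  fixes x y a :: "'a::real_normed_vector"
  assumes "norm (x - a) < r" "norm (y - a) < r" "t \<in> {0..1}"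
  shows "norm (x + t *\<^sub>R (y - x) - a) < r"
proof -
  have "x + t *\<^sub>R (y - x) - a = (1 - t) *\<^sub>R (x - a) + t *\<^sub>R (y - a)"
    by (simp add: algebra_simps)
  then have "norm (x + t *\<^sub>R (y - x) - a) \<le> (1 - t) * norm (x - a) + t * norm (y - a)"
    using assms(3) norm_triangle_ineq[of "(1 - t) *\<^sub>R (x - a)" "t *\<^sub>R (y - a)"] by simp
  also have "\<dots> < (1 - t) * r + t * r"
  proof (cases "t = 0")
    case True then show ?thesis using assms by simp
  next
    case False
    then have "t > 0" using assms(3) by simp
    then have "t * norm (y - a) < t * r" using assms(2) by simp
    moreover have "(1 - t) * norm (x - a) \<le> (1 - t) * r"
      using assms by (intro mult_left_mono) auto
    ultimately show ?thesis by linarith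
  qed
  also have "\<dots> = r" by (simp add: algebra_simps)
  finally show ?thesis .
qed



lemma norm6:
  fixes u1 :: "'a::real_normed_vector"
  shows "norm (u1 + u2 + u3 - u4 - u5 - u6) \<le> norm u1 + norm u2 + norm u3 + norm u4 + norm u5 + norm u6"
proof -
  have "norm (u1 + u2 + u3 - u4 - u5 - u6) \<le> norm (u1 + u2 + u3 - u4 - u5) + norm u6" by (rule norm_triangle_ineq4)
  also have "norm (u1 + u2 + u3 - u4 - u5) \<le> norm (u1 + u2 + u3 - u4) + norm u5" by (rule norm_triangle_ineq4)
  also have "norm (u1 + u2 + u3 - u4) \<le> norm (u1 + u2 + u3) + norm u4" by (rule norm_triangle_ineq4)
  also have "norm (u1 + u2 + u3) \<le> norm (u1 + u2) + norm u3" by (rule norm_triangle_ineq)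
  also have "norm (u1 + u2) \<le> norm u1 + norm u2" by (rule norm_triangle_ineq)
  finally show ?thesis by simp
qed

lemma pair_estimate:
  fixes f :: "real^'n::finite \<Rightarrow> real^'m::finite"
  assumes sm: "smooth f" and c: "c > 0" and c1: "c \<le> 1"
    and LB: "\<And>e V1 V2 lam. norm e = 1 \<Longrightarrow>
           c * (norm V1 + norm V2 + \<bar>lam\<bar>) \<le> norm (D1 f a V1 + D2 f a V2 e + lam *\<^sub>R D3 f a e e e)"
    and r: "r \<le> 1/2" "r * (K3 f a + 1) \<le> c / 4"
    and S: "\<And>z. norm (z - a) < r \<Longrightarrow> S1f f a z < c/100 \<and> S2f f a z < c/100 \<and> S3f f a z < c/100"
    and x: "norm (x - a) < r" and y: "norm (y - a) < r" and xy: "x \<noteq> y"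
    and eq: "\<alpha> *\<^sub>R (f y - f x) + D1 f x P + D1 f y Q = 0"
  shows "\<alpha> = 0 \<and> P = 0 \<and> Q = 0"
proof -
  define \<eta> where "\<eta> = c / 100"
  have \<eta>: "\<eta> > 0" using c unfolding \<eta>_def by simp
  define h where "h = y - x"
  define \<epsilon> where "\<epsilon> = norm h"
  have \<epsilon>: "\<epsilon> > 0" using xy unfolding \<epsilon>_def h_def by simp
  define e where "e = (1 / \<epsilon>) *\<^sub>R h"
  have ne: "norm e = 1" using \<epsilon> unfolding e_def \<epsilon>_def by simp
  have he: "h = \<epsilon> *\<^sub>R e" using \<epsilon> unfolding e_def by simp
  have \<epsilon>r: "\<epsilon> < 2 * r"
  proof -
    have "\<epsilon> = norm ((y - a) - (x - a))" unfolding \<epsilon>_def h_def by simp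
    also have "\<dots> \<le> norm (y - a) + norm (x - a)" by (rule norm_triangle_ineq4)
    finally show ?thesis using x y by linarith
  qed
  have \<epsilon>1: "\<epsilon> \<le> 1" using \<epsilon>r r by linarith
  have seg: "norm (x + t *\<^sub>R h - a) < r" if "t \<in> {0..1}" for t
    unfolding h_def using segment_in_ball[OF x y that] .
  have Sx: "S1f f a x < \<eta>" "S2f f a x < \<eta>" "S3f f a x < \<eta>" using S[OF x] unfolding \<eta>_def by auto
  have S3seg: "S3f f a (x + t *\<^sub>R h) < \<eta>" if "t \<in> {0..1}" for t
    using S[OF seg[OF that]] unfolding \<eta>_def by auto
  define R1 where "R1 = f y - f x - D1 f x h - (1/2) *\<^sub>R D2 f x h h - (1/6) *\<^sub>R D3 f x h h h"
  define R2 where "R2 = D1 f y Q - D1 f x Q - D2 f x h Q - (1/2) *\<^sub>R D3 f x h h Q"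
  have yx: "x + 1 *\<^sub>R h = y" "x + 0 *\<^sub>R h = x" unfolding h_def by simp_all
  have R1b: "norm R1 \<le> \<epsilon>^3 * (2 * \<eta>)"
  proof -
    have "norm (f (x + 1 *\<^sub>R h) - f (x + 0 *\<^sub>R h) - D1 f (x + 0 *\<^sub>R h) h - (1/2) *\<^sub>R D2 f (x + 0 *\<^sub>R h) h h
       - (1/6) *\<^sub>R D3 f (x + 0 *\<^sub>R h) h h h) \<le> \<epsilon>^3 * (2 * \<eta>)"
    proof (rule taylor3[where ga="\<lambda>t. f (x + t *\<^sub>R h)" and gb="\<lambda>t. D1 f (x + t *\<^sub>R h) h"
          and gc="\<lambda>t. D2 f (x + t *\<^sub>R h) h h" and gd="\<lambda>t. D3 f (x + t *\<^sub>R h) h h h"])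
      fix t :: real assume t: "t \<in> {0..1}"
      show "((\<lambda>t. f (x + t *\<^sub>R h)) has_vector_derivative D1 f (x + t *\<^sub>R h) h) (at t)"
        by (rule Dpath0[OF sm])
      show "((\<lambda>t. D1 f (x + t *\<^sub>R h) h) has_vector_derivative D2 f (x + t *\<^sub>R h) h h) (at t)"
        by (rule Dpath1[OF sm])
      show "((\<lambda>t. D2 f (x + t *\<^sub>R h) h h) has_vector_derivative D3 f (x + t *\<^sub>R h) h h h) (at t)"
        by (rule Dpath2[OF sm])
      have "norm (D3 f (x + t *\<^sub>R h) h h h - D3 f (x + 0 *\<^sub>R h) h h h)
          \<le> norm h * norm h * norm h * (S3f f a (x + t *\<^sub>R h) + S3f f a x)"
        using D3_diff_bound[of f "x + t *\<^sub>R h" h h h x] S3_tri[of f "x + t *\<^sub>R h" x a]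
        by (simp add: mult_left_mono order_trans)
      also have "\<dots> \<le> \<epsilon>^3 * (2 * \<eta>)"
        using S3seg[OF t] Sx(3) unfolding \<epsilon>_def power3_eq_cube
        by (intro mult_left_mono) auto
      finally show "norm (D3 f (x + t *\<^sub>R h) h h h - D3 f (x + 0 *\<^sub>R h) h h h) \<le> \<epsilon>^3 * (2 * \<eta>)" .
    qed
    then show ?thesis unfolding R1_def yx .
  qed
  have R2b: "norm R2 \<le> \<epsilon>^2 * norm Q * (2 * \<eta>)"
  proof -
    have "norm (D1 f (x + 1 *\<^sub>R h) Q - D1 f (x + 0 *\<^sub>R h) Q - D2 f (x + 0 *\<^sub>R h) h Q
       - (1/2) *\<^sub>R D3 f (x + 0 *\<^sub>R h) h h Q) \<le> \<epsilon>^2 * norm Q * (2 * \<eta>)"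
    proof (rule taylor2[where ga="\<lambda>t. D1 f (x + t *\<^sub>R h) Q" and gb="\<lambda>t. D2 f (x + t *\<^sub>R h) h Q"
          and gc="\<lambda>t. D3 f (x + t *\<^sub>R h) h h Q"])
      fix t :: real assume t: "t \<in> {0..1}"
      show "((\<lambda>t. D1 f (x + t *\<^sub>R h) Q) has_vector_derivative D2 f (x + t *\<^sub>R h) h Q) (at t)"
        by (rule Dpath1[OF sm])
      show "((\<lambda>t. D2 f (x + t *\<^sub>R h) h Q) has_vector_derivative D3 f (x + t *\<^sub>R h) h h Q) (at t)"
        by (rule Dpath2[OF sm])
      have "norm (D3 f (x + t *\<^sub>R h) h h Q - D3 f (x + 0 *\<^sub>R h) h h Q)
          \<le> norm h * norm h * norm Q * (S3f f a (x + t *\<^sub>R h) + S3f f a x)"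
        using D3_diff_bound[of f "x + t *\<^sub>R h" h h Q x] S3_tri[of f "x + t *\<^sub>R h" x a]
        by (simp add: mult_left_mono order_trans)
      also have "\<dots> \<le> \<epsilon>^2 * norm Q * (2 * \<eta>)"
        using S3seg[OF t] Sx(3) unfolding \<epsilon>_def power2_eq_square
        by (intro mult_left_mono) auto
      finally show "norm (D3 f (x + t *\<^sub>R h) h h Q - D3 f (x + 0 *\<^sub>R h) h h Q) \<le> \<epsilon>^2 * norm Q * (2 * \<eta>)" .
    qed
    then show ?thesis unfolding R2_def yx .
  qed
  define Qp where "Qp = Q + (\<alpha>/2) *\<^sub>R h"
  define V1 where "V1 = \<alpha> *\<^sub>R h + P + Q"
  define V2 where "V2 = \<epsilon> *\<^sub>R Qp"
  define lam where "lam = - (\<alpha> * \<epsilon>^3 / 12)"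
  define X where "X = D1 f x V1 + D2 f x e V2 + lam *\<^sub>R D3 f x e e e + (\<epsilon>/2) *\<^sub>R D3 f x e e V2 + \<alpha> *\<^sub>R R1 + R2"
  have X0: "X = 0"
  proof -
    have "X \<bullet> w = (\<alpha> *\<^sub>R (f y - f x) + D1 f x P + D1 f y Q) \<bullet> w" for w
      unfolding X_def R1_def R2_def V1_def V2_def Qp_def lam_def he
      using \<epsilon> by (simp add: D1_lin[OF sm] D2_lin D3_lin inner_simps field_simps power3_eq_cube)
    then have "X \<bullet> X = 0" using eq by simp
    then show ?thesis by simp
  qed
  define La where "La = D1 f a V1 + D2 f a V2 e + lam *\<^sub>R D3 f a e e e"
  have La_eq: "La = (D1 f a V1 - D1 f x V1) + (D2 f a e V2 - D2 f x e V2) + lam *\<^sub>R (D3 f a e e e - D3 f x e e e)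
      - (\<epsilon>/2) *\<^sub>R D3 f x e e V2 - \<alpha> *\<^sub>R R1 - R2 + X"
    unfolding La_def X_def D2_sym[OF sm, of a V2 e] by (simp add: algebra_simps)
  have tri: "norm La \<le> norm (D1 f a V1 - D1 f x V1) + norm (D2 f a e V2 - D2 f x e V2)
      + norm (lam *\<^sub>R (D3 f a e e e - D3 f x e e e)) + norm ((\<epsilon>/2) *\<^sub>R D3 f x e e V2) + norm (\<alpha> *\<^sub>R R1) + norm R2"
    unfolding La_eq X0 add_0_right by (rule norm6)
  have n1: "norm (D1 f a V1 - D1 f x V1) \<le> \<eta> * norm V1"
  proof -
    have "norm (D1 f a V1 - D1 f x V1) \<le> norm V1 * S1f f a x"
      using D1_diff_bound[OF sm, of x V1 a] unfolding S1f_def by (simp add: norm_minus_commute)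
    also have "\<dots> \<le> norm V1 * \<eta>" using Sx(1) by (intro mult_left_mono) auto
    finally show ?thesis by (simp add: mult.commute)
  qed
  have n2: "norm (D2 f a e V2 - D2 f x e V2) \<le> \<eta> * norm V2"
  proof -
    have "norm (D2 f a e V2 - D2 f x e V2) \<le> norm e * norm V2 * S2f f a x"
      using D2_diff_bound[of f x e V2 a] unfolding S2f_def by (simp add: norm_minus_commute)
    also have "\<dots> \<le> norm V2 * \<eta>" using Sx(2) ne by (simp add: mult_left_mono)
    finally show ?thesis by (simp add: mult.commute)
  qed
  have n3: "norm (lam *\<^sub>R (D3 f a e e e - D3 f x e e e)) \<le> \<eta> * \<bar>lam\<bar>"
  proof -
    have "norm (D3 f a e e e - D3 f x e e e) \<le> norm e * norm e * norm e * S3f f a x"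
      using D3_diff_bound[of f x e e e a] unfolding S3f_def by (simp add: norm_minus_commute)
    also have "\<dots> \<le> \<eta>" using Sx(3) ne by simp
    finally have "norm (D3 f a e e e - D3 f x e e e) \<le> \<eta>" .
    then have "\<bar>lam\<bar> * norm (D3 f a e e e - D3 f x e e e) \<le> \<bar>lam\<bar> * \<eta>" by (intro mult_left_mono) auto
    then show ?thesis by (simp add: mult.commute)
  qed
  have n4: "norm ((\<epsilon>/2) *\<^sub>R D3 f x e e V2) \<le> c/4 * norm V2"
  proof -
    have K: "K3 f x \<le> K3 f a + 1" using K3_tri[of f x a] Sx(3) c c1 unfolding \<eta>_def by linarith
    have K0: "0 \<le> K3 f a" unfolding K3_def by (intro sum_nonneg) auto
    have "norm (D3 f x e e V2) \<le> norm e * norm e * norm V2 * K3 f x"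
      using D3_bound[of f x e e V2] unfolding K3_def by simp
    also have "\<dots> \<le> norm V2 * (K3 f a + 1)" using ne K by (simp add: mult_left_mono)
    finally have a: "norm (D3 f x e e V2) \<le> norm V2 * (K3 f a + 1)" .
    have "norm ((\<epsilon>/2) *\<^sub>R D3 f x e e V2) = (\<epsilon>/2) * norm (D3 f x e e V2)" using \<epsilon> by simp
    also have "\<dots> \<le> r * (norm V2 * (K3 f a + 1))"
      using a \<epsilon>r \<epsilon> by (intro mult_mono) auto
    also have "\<dots> = (r * (K3 f a + 1)) * norm V2" by (simp add: algebra_simps)
    also have "\<dots> \<le> c/4 * norm V2" using r(2) by (intro mult_right_mono) auto
    finally show ?thesis .
  qed
  have lamabs: "\<bar>lam\<bar> = \<bar>\<alpha>\<bar> * \<epsilon>^3 / 12" unfolding lam_def using \<epsilon> by (simp add: abs_mult)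
  have n5: "norm (\<alpha> *\<^sub>R R1) \<le> 24 * \<eta> * \<bar>lam\<bar>"
  proof -
    have "norm (\<alpha> *\<^sub>R R1) = \<bar>\<alpha>\<bar> * norm R1" by simp
    also have "\<dots> \<le> \<bar>\<alpha>\<bar> * (\<epsilon>^3 * (2 * \<eta>))" using R1b by (intro mult_left_mono) auto
    also have "\<dots> = 24 * \<eta> * \<bar>lam\<bar>" unfolding lamabs by (simp add: algebra_simps)
    finally show ?thesis .
  qed
  have n6: "norm R2 \<le> 2 * \<eta> * norm V2 + 12 * \<eta> * \<bar>lam\<bar>"
  proof -
    have Qeq: "Q = (1/\<epsilon>) *\<^sub>R V2 - (\<alpha>/2) *\<^sub>R h" unfolding V2_def Qp_def using \<epsilon> by simp
    have "norm Q \<le> norm ((1/\<epsilon>) *\<^sub>R V2) + norm ((\<alpha>/2) *\<^sub>R h)"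
      unfolding Qeq by (rule norm_triangle_ineq4)
    also have "\<dots> = norm V2 / \<epsilon> + \<bar>\<alpha>\<bar> * \<epsilon> / 2" using \<epsilon> unfolding \<epsilon>_def by simp
    finally have nQ: "norm Q \<le> norm V2 / \<epsilon> + \<bar>\<alpha>\<bar> * \<epsilon> / 2" .
    have "\<epsilon>^2 * norm Q \<le> \<epsilon>^2 * (norm V2 / \<epsilon> + \<bar>\<alpha>\<bar> * \<epsilon> / 2)"
      using nQ by (intro mult_left_mono) auto
    also have "\<dots> = \<epsilon> * norm V2 + 6 * \<bar>lam\<bar>" unfolding lamabs using \<epsilon> by (simp add: field_simps power2_eq_square power3_eq_cube)
    also have "\<dots> \<le> norm V2 + 6 * \<bar>lam\<bar>" using \<epsilon>1 \<epsilon> mult_left_le_one_le[of "norm V2" \<epsilon>] by simp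
    finally have b: "\<epsilon>^2 * norm Q \<le> norm V2 + 6 * \<bar>lam\<bar>" .
    have "norm R2 \<le> (\<epsilon>^2 * norm Q) * (2 * \<eta>)" using R2b by simp
    also have "\<dots> \<le> (norm V2 + 6 * \<bar>lam\<bar>) * (2 * \<eta>)" using b \<eta> by (intro mult_right_mono) auto
    finally show ?thesis by (simp add: algebra_simps)
  qed
  have lb: "c * (norm V1 + norm V2 + \<bar>lam\<bar>) \<le> norm La" unfolding La_def by (rule LB[OF ne])
  have "c * (norm V1 + norm V2 + \<bar>lam\<bar>) \<le> \<eta> * norm V1 + (3 * \<eta> + c/4) * norm V2 + 37 * \<eta> * \<bar>lam\<bar>"
    using lb tri n1 n2 n3 n4 n5 n6 by (simp add: algebra_simps)
  also have "\<dots> \<le> (37 * \<eta> + c/4) * norm V1 + (37 * \<eta> + c/4) * norm V2 + (37 * \<eta> + c/4) * \<bar>lam\<bar>"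
    using \<eta> c by (intro add_mono mult_right_mono) auto
  also have "\<dots> = (62/100 * c) * (norm V1 + norm V2 + \<bar>lam\<bar>)"
    unfolding \<eta>_def by (simp add: algebra_simps)
  finally have "(1 * c) * (norm V1 + norm V2 + \<bar>lam\<bar>) \<le> (62/100 * c) * (norm V1 + norm V2 + \<bar>lam\<bar>)" by simp
  then have "(38/100 * c) * (norm V1 + norm V2 + \<bar>lam\<bar>) \<le> 0" by (simp add: algebra_simps)
  moreover have S0: "0 \<le> norm V1 + norm V2 + \<bar>lam\<bar>" by simp
  ultimately have z: "norm V1 + norm V2 + \<bar>lam\<bar> \<le> 0"
    using c by (metis less_eq_real_def mult_pos_pos not_le zero_less_divide_iff zero_less_numeral mult_pos_pos)
  have "norm V1 = 0" using z norm_ge_zero[of V2] abs_ge_zero[of lam] norm_ge_zero[of V1] by linarith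
  moreover have "norm V2 = 0" using z norm_ge_zero[of V2] abs_ge_zero[of lam] norm_ge_zero[of V1] by linarith
  moreover have "\<bar>lam\<bar> = 0" using z norm_ge_zero[of V2] abs_ge_zero[of lam] norm_ge_zero[of V1] by linarith
  ultimately have "V1 = 0" "V2 = 0" "lam = 0" by simp_all
  then have a0: "\<alpha> = 0" and "Qp = 0" using \<epsilon> unfolding lam_def V2_def by auto
  then have "Q = 0" unfolding Qp_def by simp
  moreover have "P = 0" using \<open>V1 = 0\<close> a0 \<open>Q = 0\<close> unfolding V1_def by simp
  ultimately show ?thesis using a0 by simp
qed



theorem theorem2p1:
  fixes f :: "real^'n::finite \<Rightarrow> real^'m::finite" and a :: "real^'n"
  assumes "smooth f" and "local_condition f a"
  shows "\<exists>U. open U \<and> a \<in> U \<and> totally_skew_embedding f U"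
proof -
  note sm = assms(1)
  obtain c0 where c0: "c0 > 0" and LB0: "\<And>e V1 V2 lam. norm e = 1 \<Longrightarrow>
           c0 * (norm V1 + norm V2 + \<bar>lam\<bar>) \<le> norm (D1 f a V1 + D2 f a V2 e + lam *\<^sub>R D3 f a e e e)"
    using lower_bound[OF assms] by blast
  define c where "c = min c0 1"
  have c: "c > 0" "c \<le> 1" using c0 unfolding c_def by auto
  have LB: "c * (norm V1 + norm V2 + \<bar>lam\<bar>) \<le> norm (D1 f a V1 + D2 f a V2 e + lam *\<^sub>R D3 f a e e e)"
    if "norm e = 1" for e V1 V2 lam
  proof -
    have "c * (norm V1 + norm V2 + \<bar>lam\<bar>) \<le> c0 * (norm V1 + norm V2 + \<bar>lam\<bar>)"
      unfolding c_def by (intro mult_right_mono) auto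
    then show ?thesis using LB0[OF that, of V1 V2 lam] by linarith
  qed
  have cF1: "\<And>i. continuous_on UNIV (pd i f)" by (intro smooth_cont smooth_pd sm)
  have cF2: "\<And>i j. continuous_on UNIV (pd i (pd j f))" by (intro smooth_cont smooth_pd sm)
  have cF3: "\<And>i j k. continuous_on UNIV (pd i (pd j (pd k f)))" by (intro smooth_cont smooth_pd sm)
  have "continuous_on UNIV (S1f f a)" unfolding S1f_def[abs_def] by (intro continuous_intros cF1)
  then have iS1: "isCont (S1f f a) a" using continuous_on_eq_continuous_at by blast
  have "continuous_on UNIV (S2f f a)" unfolding S2f_def[abs_def] by (intro continuous_intros cF2)
  then have iS2: "isCont (S2f f a) a" using continuous_on_eq_continuous_at by blast
  have "continuous_on UNIV (S3f f a)" unfolding S3f_def[abs_def] by (intro continuous_intros cF3)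
  then have iS3: "isCont (S3f f a) a" using continuous_on_eq_continuous_at by blast
  have S0: "S1f f a a = 0" "S2f f a a = 0" "S3f f a a = 0" unfolding S1f_def S2f_def S3f_def by simp_all
  have eta: "c / 100 > 0" using c by simp
  obtain r1 where r1: "r1 > 0" "\<And>z. norm (z - a) < r1 \<Longrightarrow> norm (S1f f a z - S1f f a a) < c/100"
    using cont_delta[OF iS1 eta] by blast
  obtain r2 where r2: "r2 > 0" "\<And>z. norm (z - a) < r2 \<Longrightarrow> norm (S2f f a z - S2f f a a) < c/100"
    using cont_delta[OF iS2 eta] by blast
  obtain r3 where r3: "r3 > 0" "\<And>z. norm (z - a) < r3 \<Longrightarrow> norm (S3f f a z - S3f f a a) < c/100"
    using cont_delta[OF iS3 eta] by blast
  have K0: "0 \<le> K3 f a" unfolding K3_def by (intro sum_nonneg) auto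
  define r where "r = min (min r1 r2) (min r3 (min (1/2) (c / (4 * (K3 f a + 1)))))"
  have rpos: "r > 0" using r1 r2 r3 c K0 unfolding r_def by simp
  have rh: "r \<le> 1/2" unfolding r_def by (metis min.cobounded1 min.cobounded2 order_trans)
  have rK: "r * (K3 f a + 1) \<le> c / 4"
  proof -
    have "r \<le> c / (4 * (K3 f a + 1))" unfolding r_def by (metis min.cobounded1 min.cobounded2 order_trans)
    then have "r * (K3 f a + 1) \<le> c / (4 * (K3 f a + 1)) * (K3 f a + 1)"
      using K0 by (intro mult_right_mono) auto
    also have "\<dots> = c / 4" using K0 by (simp add: field_simps)
    finally show ?thesis .
  qed
  have S: "S1f f a z < c/100 \<and> S2f f a z < c/100 \<and> S3f f a z < c/100" if "norm (z - a) < r" for z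
  proof -
    have "norm (z - a) < r1" "norm (z - a) < r2" "norm (z - a) < r3" using that unfolding r_def by auto
    then show ?thesis using r1(2) r2(2) r3(2) S0 by fastforce
  qed
  have P1: "\<alpha> = 0 \<and> P = 0 \<and> Q = 0"
    if "norm (x - a) < r" "norm (y - a) < r" "x \<noteq> y" "\<alpha> *\<^sub>R (f y - f x) + D1 f x P + D1 f y Q = 0"
    for x y \<alpha> P Q
    by (rule pair_estimate[OF sm c(1) c(2) LB rh rK S that]) auto
  have P2: "P = 0" if x: "norm (x - a) < r" and z: "D1 f x P = 0" for x P
  proof -
    define e0 :: "real^'n" where "e0 = axis undefined 1"
    have ne0: "norm e0 = 1" unfolding e0_def by simp
    have "c * norm P \<le> norm (D1 f a P)"
      using LB[OF ne0, of P 0 0] unfolding D2_def by simp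
    also have "norm (D1 f a P) = norm (D1 f x P - D1 f a P)" using z by simp
    also have "\<dots> \<le> norm P * S1f f a x" using D1_diff_bound[OF sm, of x P a] unfolding S1f_def .
    also have "\<dots> \<le> norm P * (c/100)" using S[OF x] by (intro mult_left_mono) auto
    finally have "c * norm P \<le> (c/100) * norm P" by (simp add: mult.commute)
    moreover have "(c - c/100) * norm P = c * norm P - c/100 * norm P" by (rule left_diff_distrib)
    ultimately have m: "(c - c/100) * norm P \<le> 0" by linarith
    have "c - c/100 > 0" using c by simp
    then have "norm P \<le> 0" using m by (simp add: mult_le_0_iff)
    then show ?thesis by simp
  qed
  define U where "U = ball a (r/2)"
  have Ur: "norm (x - a) < r" if "x \<in> cball a (r/2)" for x
    using that rpos by (simp add: dist_norm norm_minus_commute)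
  have UC: "U \<subseteq> cball a (r/2)" unfolding U_def by auto
  have injC: "inj_on f (cball a (r/2))"
  proof (rule inj_onI)
    fix x y assume x: "x \<in> cball a (r/2)" and y: "y \<in> cball a (r/2)" and fxy: "f x = f y"
    show "x = y"
    proof (rule ccontr)
      assume xy: "x \<noteq> y"
      have "1 *\<^sub>R (f y - f x) + D1 f x 0 + D1 f y 0 = 0" using fxy by (simp add: D1_lin[OF sm])
      from P1[OF Ur[OF x] Ur[OF y] xy this] show False by simp
    qed
  qed
  have emb: "embedding_on f U"
    unfolding embedding_on_def
  proof (intro conjI ballI)
    show "open U" unfolding U_def by simp
    fix x assume "x \<in> U"
    then have x: "norm (x - a) < r" using Ur UC by blast
    show "f differentiable (at x)" by (rule smooth_diff[OF sm])
    show "inj (frechet_derivative f (at x))"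
    proof (rule injI)
      fix u v assume "frechet_derivative f (at x) u = frechet_derivative f (at x) v"
      then have "D1 f x (u - v) = 0" unfolding D1_def[symmetric] by (simp add: D1_lin[OF sm])
      then have "u - v = 0" by (rule P2[OF x])
      then show "u = v" by simp
    qed
  next
    show "inj_on f U" using injC UC inj_on_subset by blast
  next
    have cC: "continuous_on (cball a (r/2)) f"
      using continuous_on_subset[OF smooth_cont[OF sm]] by blast
    obtain g where g: "homeomorphism (cball a (r/2)) (f ` cball a (r/2)) f g"
      using homeomorphism_compact[OF compact_cball cC refl injC] by blast
    have gU: "homeomorphism U (f ` U) f g"
      by (rule homeomorphism_of_subsets[OF g UC order_refl refl])
    have injU: "inj_on f U" using injC UC inj_on_subset by blast
    have eqg: "inv_into U f y = g y" if "y \<in> f ` U" for y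
    proof -
      obtain x where x: "x \<in> U" "y = f x" using \<open>y \<in> f ` U\<close> by blast
      have "inv_into U f (f x) = x" by (rule inv_into_f_f[OF injU x(1)])
      moreover have "g (f x) = x" by (rule homeomorphism_apply1[OF gU x(1)])
      ultimately show ?thesis using x(2) by simp
    qed
    show "homeomorphism U (f ` U) f (inv_into U f)"
      by (rule homeomorphism_cong[OF gU refl refl refl eqg])
  qed
  have skew: "totally_skew_at f x y" if x: "x \<in> U" and y: "y \<in> U" and fxy: "f x \<noteq> f y" for x y
    unfolding totally_skew_at_def
  proof (intro allI impI conjI)
    fix u w
    assume H: "u \<in> range (frechet_derivative f (at x)) \<and> u \<noteq> 0 \<and> w \<in> range (frechet_derivative f (at y)) \<and> w \<noteq> 0"
    obtain p where p: "u = D1 f x p" using H unfolding D1_def by blast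
    obtain q where q: "w = D1 f y q" using H unfolding D1_def by blast
    have xr: "norm (x - a) < r" and yr: "norm (y - a) < r" using x y Ur UC by blast+
    have xy: "x \<noteq> y" using fxy by blast
    show "\<not> (\<exists>k. w = k *\<^sub>R u)"
    proof
      assume "\<exists>k. w = k *\<^sub>R u"
      then obtain k where k: "w = k *\<^sub>R u" by blast
      have d: "D1 f x ((-k) *\<^sub>R p) = (-k) *\<^sub>R u" unfolding p by (rule D1_lin(2)[OF sm])
      have "0 *\<^sub>R (f y - f x) + D1 f x ((-k) *\<^sub>R p) + D1 f y q = 0"
        unfolding d q[symmetric] k by simp
      from P1[OF xr yr xy this] have "q = 0" by simp
      then show False using H q by (simp add: D1_lin[OF sm])
    qed
    show "aline (f x) u \<inter> aline (f y) w = {}"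
    proof (rule ccontr)
      assume "aline (f x) u \<inter> aline (f y) w \<noteq> {}"
      then obtain s t where st: "f x + s *\<^sub>R u = f y + t *\<^sub>R w" unfolding aline_def by blast
      have d1: "D1 f x ((-s) *\<^sub>R p) = (-s) *\<^sub>R u" unfolding p by (rule D1_lin(2)[OF sm])
      have d2: "D1 f y (t *\<^sub>R q) = t *\<^sub>R w" unfolding q by (rule D1_lin(2)[OF sm])
      have fy: "f y = f x + s *\<^sub>R u - t *\<^sub>R w" using st by (simp add: algebra_simps)
      have "1 *\<^sub>R (f y - f x) + D1 f x ((-s) *\<^sub>R p) + D1 f y (t *\<^sub>R q) = 0"
        unfolding d1 d2 fy by simp
      from P1[OF xr yr xy this] show False by simp
    qed
  qed
  have "open U" "a \<in> U" unfolding U_def using rpos by auto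
  moreover have "totally_skew_embedding f U"
    unfolding totally_skew_embedding_def using emb skew by blast
  ultimately show ?thesis by blast
qed

end
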